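(* Let a constant $\lambda>0$ and a function $\ell=\ell(n)=o(\log n)$ be given. If $n$ is large enough then, whenever $E_0$, $E_1$ and $\{e\}$ are disjoint sets of possible edges of $\tilde G=\tilde G(n,\ell,\lambda)$ with $|E_1|\le n^{1/3}$ such that $E_1\cup\{e\}$ contains no cycle of length at most $\ell$, we have \[ (1-n^{-1/4})\lambda/n\ \le\ \Pr\bigl(e\in E(\tilde G)\ \big|\ E_1\subset E(\tilde G)\subset E_0^{c}\bigr)\ \le\ \lambda/n . \]
   Context: $G(n,p)$ is the Erdős–Rényi random graph on vertex set $[n]$ with each possible edge present independently with probability $p$. $\tilde G(n,\ell,\lambda)$ is the random graph whose distribution is that of $G(n,\lambda/n)$ conditioned on containing no cycle of length at most $\ell$. $E_0^{c}$ denotes the complement of $E_0$ in the set of all possible edges. *)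

theory Defs
  imports "HOL-Analysis.Analysis" "HOL-Library.Landau_Symbols"
begin

definition all_edges :: "nat \<Rightarrow> nat set set" where
  "all_edges n = {e. \<exists>u v. u \<in> {1..n} \<and> v \<in> {1..n} \<and> u \<noteq> v \<and> e = {u, v}}"

definition has_short_cycle :: "nat \<Rightarrow> nat set set \<Rightarrow> bool" where
  "has_short_cycle l E \<longleftrightarrow> (\<exists>vs :: nat list. 3 \<le> length vs \<and> length vs \<le> l \<and> distinct vs \<and>
      (\<forall>i < length vs. {vs ! i, vs ! ((i + 1) mod length vs)} \<in> E))"

definition gnp_weight :: "nat \<Rightarrow> real \<Rightarrow> nat set set \<Rightarrow> real" where
  "gnp_weight n p E = p ^ card E * (1 - p) ^ (card (all_edges n) - card E)"

text \<open>Probability of an event P under \<tilde>G(n,l,lam), i.e. G(n, lam/n) conditioned on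
  containing no cycle of length at most l.\<close>
definition Gt_prob :: "nat \<Rightarrow> nat \<Rightarrow> real \<Rightarrow> (nat set set \<Rightarrow> bool) \<Rightarrow> real" where
  "Gt_prob n l lam P =
     (\<Sum>E \<in> {E. E \<subseteq> all_edges n \<and> \<not> has_short_cycle l E \<and> P E}. gnp_weight n (lam / real n) E) /
     (\<Sum>E \<in> {E. E \<subseteq> all_edges n \<and> \<not> has_short_cycle l E}. gnp_weight n (lam / real n) E)"

definition Gt_cond_prob :: "nat \<Rightarrow> nat \<Rightarrow> real \<Rightarrow> (nat set set \<Rightarrow> bool) \<Rightarrow> (nat set set \<Rightarrow> bool) \<Rightarrow> real" where
  "Gt_cond_prob n l lam P Q = Gt_prob n l lam (\<lambda>E. P E \<and> Q E) / Gt_prob n l lam Q"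

end

theory Submission
  imports Defs
begin

fun pedges :: "'a list \<Rightarrow> 'a set list" where
  "pedges (x # y # r) = {x, y} # pedges (y # r)"
| "pedges _ = []"

lemma pedges_nth: "Suc i < length xs \<Longrightarrow> {xs ! i, xs ! Suc i} \<in> set (pedges xs)"
proof (induction xs arbitrary: i rule: pedges.induct)
  case (1 x y r)
  then show ?case by (cases i) auto
qed auto

lemma pedges_set: "f \<in> set (pedges xs) \<Longrightarrow> \<exists>i. Suc i < length xs \<and> f = {xs ! i, xs ! Suc i}"
proof (induction xs rule: pedges.induct)
  case (1 x y r)
  show ?case
  proof (cases "f = {x, y}")
    case True then show ?thesis by (intro exI[of _ 0]) auto
  next
    case False
    then have "f \<in> set (pedges (y # r))" using 1(2) by simp
    from 1(1)[OF this] obtain i where "Suc i < length (y # r)" "f = {(y#r) ! i, (y#r) ! Suc i}" by blast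
    then show ?thesis by (intro exI[of _ "Suc i"]) auto
  qed
qed auto

lemma pedges_sub: "f \<in> set (pedges xs) \<Longrightarrow> f \<subseteq> set xs"
  by (induction xs rule: pedges.induct) auto

lemma all_edges_mem: "{x, y} \<in> all_edges n \<Longrightarrow> x \<in> {1..n} \<and> y \<in> {1..n}"
  unfolding all_edges_def by (auto simp: doubleton_eq_iff)

lemma all_edges_card: "f \<in> all_edges n \<Longrightarrow> card f = 2"
  unfolding all_edges_def by auto

lemma all_edges_finite: "finite (all_edges n)"
proof -
  have "all_edges n \<subseteq> Pow {1..n}" unfolding all_edges_def by auto
  then show ?thesis by (rule finite_subset) auto
qed

fun codes :: "nat \<Rightarrow> nat set \<Rightarrow> nat \<Rightarrow> nat \<Rightarrow> (nat \<times> nat) list set" where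
  "codes n W 0 a = (\<lambda>b. [(a, b)]) ` W"
| "codes n W (Suc j) a = (\<Union>b\<in>{1..n}. \<Union>a'\<in>(if b \<in> W then W else {b}). (\<lambda>r. (a, b) # r) ` codes n W j a')"

lemma codes_length: "c \<in> codes n W j a \<Longrightarrow> length c = Suc j"
  by (induction j arbitrary: a c) auto

lemma sum_nxt: "finite W \<Longrightarrow> (\<Sum>b\<in>{1..n}. card (if b \<in> W then W else {b})) \<le> n + card W ^ 2"
proof -
  assume fw: "finite W"
  have "(\<Sum>b\<in>{1..n}. card (if b \<in> W then W else {b})) \<le> (\<Sum>b\<in>{1..n}. 1 + (if b \<in> W then card W else 0))"
    by (intro sum_mono) auto
  also have "\<dots> = n + (\<Sum>b\<in>{1..n} \<inter> W. card W)"
    by (simp only: sum.distrib sum.If_cases[OF finite_atLeastAtMost]) (simp add: Int_def)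
  also have "\<dots> = n + card ({1..n} \<inter> W) * card W" by simp
  also have "\<dots> \<le> n + card W * card W"
    using fw by (intro add_left_mono mult_right_mono card_mono) auto
  finally show ?thesis by (simp add: power2_eq_square)
qed

lemma codes_card: "finite W \<Longrightarrow> finite (codes n W j a) \<and> card (codes n W j a) \<le> card W * (n + card W ^ 2) ^ j"
proof (induction j arbitrary: a)
  case 0
  then show ?case by (auto intro: card_image_le)
next
  case (Suc j)
  define K where "K = card W * (n + card W ^ 2) ^ j"
  let ?X = "\<lambda>b. \<Union>a'\<in>(if b \<in> W then W else {b}). (\<lambda>r. (a, b) # r) ` codes n W j a'"
  have fin: "finite (?X b)" for b using Suc by auto
  have cX: "card (?X b) \<le> card (if b \<in> W then W else {b}) * K" for b
  proof -
    have "card (?X b) \<le> (\<Sum>a'\<in>(if b \<in> W then W else {b}). card ((\<lambda>r. (a, b) # r) ` codes n W j a'))"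
      using Suc by (intro card_UN_le) auto
    also have "\<dots> \<le> (\<Sum>a'\<in>(if b \<in> W then W else {b}). K)"
      using Suc unfolding K_def by (intro sum_mono) (meson card_image_le le_trans)
    finally show ?thesis by simp
  qed
  have "card (codes n W (Suc j) a) \<le> (\<Sum>b\<in>{1..n}. card (?X b))"
    by (simp only: codes.simps) (intro card_UN_le, simp)
  also have "\<dots> \<le> (\<Sum>b\<in>{1..n}. card (if b \<in> W then W else {b}) * K)"
    by (intro sum_mono cX)
  also have "\<dots> = (\<Sum>b\<in>{1..n}. card (if b \<in> W then W else {b})) * K"
    by (simp add: sum_distrib_right)
  also have "\<dots> \<le> (n + card W ^ 2) * K"
    using sum_nxt[OF Suc.prems] by (intro mult_right_mono) auto
  finally have "card (codes n W (Suc j) a) \<le> card W * (n + card W ^ 2) ^ Suc j"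
    unfolding K_def by (simp add: algebra_simps)
  moreover have "finite (codes n W (Suc j) a)" using fin by simp
  ultimately show ?case by blast
qed

definition cedges :: "(nat \<times> nat) list \<Rightarrow> nat set list" where
  "cedges c = map (\<lambda>(x, y). {x, y}) c"

lemma extract_code:
  assumes "distinct xs" "set (pedges xs) \<subseteq> E" "E \<subseteq> all_edges n" "last xs \<in> W" "\<Union>E1 \<subseteq> W"
    "\<exists>f\<in>set (pedges xs). f \<notin> E1"
  shows "\<exists>j a c. c \<in> codes n W j a \<and> (a = hd xs \<or> (a \<in> W \<and> hd xs \<in> W)) \<and>
     set (cedges c) \<subseteq> E - E1 \<and> distinct (cedges c) \<and> (\<forall>f\<in>set (cedges c). f \<subseteq> set xs) \<and>
     Suc j < length xs"
  using assms
proof (induction xs rule: pedges.induct)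
  case (1 x y r)
  have xyE: "{x, y} \<in> E" using 1(3) by simp
  then have yn: "y \<in> {1..n}" using 1(4) all_edges_mem by blast
  show ?case
  proof (cases "{x, y} \<in> E1")
    case True
    then have xW: "x \<in> W" and yW: "y \<in> W" using 1(6) by auto
    have ex: "\<exists>f\<in>set (pedges (y # r)). f \<notin> E1" using 1(7) True by auto
    have "\<exists>j a c. c \<in> codes n W j a \<and> (a = hd (y # r) \<or> (a \<in> W \<and> hd (y # r) \<in> W)) \<and>
     set (cedges c) \<subseteq> E - E1 \<and> distinct (cedges c) \<and> (\<forall>f\<in>set (cedges c). f \<subseteq> set (y # r)) \<and>
     Suc j < length (y # r)"
      by (rule 1(1)) (use 1(2-6) ex in auto)
    then obtain j a c where "c \<in> codes n W j a" "(a = hd (y # r) \<or> (a \<in> W \<and> hd (y # r) \<in> W))"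
      "set (cedges c) \<subseteq> E - E1" "distinct (cedges c)" "(\<forall>f\<in>set (cedges c). f \<subseteq> set (y # r))"
      "Suc j < length (y # r)" by (elim exE conjE) assumption
    then show ?thesis using xW yW by (intro exI[of _ j] exI[of _ a] exI[of _ c]) auto
  next
    case False
    show ?thesis
    proof (cases "\<exists>f\<in>set (pedges (y # r)). f \<notin> E1")
      case True
      have "\<exists>j a c. c \<in> codes n W j a \<and> (a = hd (y # r) \<or> (a \<in> W \<and> hd (y # r) \<in> W)) \<and>
       set (cedges c) \<subseteq> E - E1 \<and> distinct (cedges c) \<and> (\<forall>f\<in>set (cedges c). f \<subseteq> set (y # r)) \<and>
       Suc j < length (y # r)"
        by (rule 1(1)) (use 1(2-6) True in auto)
      then obtain j a c where c: "c \<in> codes n W j a" and a: "(a = hd (y # r) \<or> (a \<in> W \<and> hd (y # r) \<in> W))"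
        and s: "set (cedges c) \<subseteq> E - E1" "distinct (cedges c)" "(\<forall>f\<in>set (cedges c). f \<subseteq> set (y # r))"
        "Suc j < length (y # r)" by (elim exE conjE) assumption
      have "(x, y) # c \<in> codes n W (Suc j) x"
      proof -
        have "a \<in> (if y \<in> W then W else {y})" using a by auto
        then have "(x, y) # c \<in> (\<Union>a'\<in>(if y \<in> W then W else {y}). (\<lambda>r. (x, y) # r) ` codes n W j a')"
          using c by blast
        then show ?thesis using yn by (simp only: codes.simps) blast
      qed
      moreover have "{x, y} \<notin> set (cedges c)"
        using s(3) 1(2) by auto
      ultimately show ?thesis using s False xyE
        by (intro exI[of _ "Suc j"] exI[of _ x] exI[of _ "(x, y) # c"]) (auto simp: cedges_def)
    next
      case False2: False
      have yW: "y \<in> W"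
      proof (cases r)
        case Nil then show ?thesis using 1(5) by simp
      next
        case (Cons z r')
        then have "{y, z} \<in> E1" using False2 by simp
        then show ?thesis using 1(6) by auto
      qed
      have "[(x, y)] \<in> codes n W 0 x" using yW by simp
      then show ?thesis using False xyE
        by (intro exI[of _ 0] exI[of _ x] exI[of _ "[(x, y)]"]) (auto simp: cedges_def)
    qed
  qed
qed simp_all

lemma cycle_path:
  assumes hs: "has_short_cycle l (insert e E)" and nE: "\<not> has_short_cycle l E"
    and nE1: "\<not> has_short_cycle l (insert e E1)"
  shows "\<exists>ws. distinct ws \<and> 3 \<le> length ws \<and> length ws \<le> l \<and> set (pedges ws) \<subseteq> E \<and>
     e = {last ws, hd ws} \<and> (\<exists>f\<in>set (pedges ws). f \<notin> E1)"
proof -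
  obtain vs where v3: "3 \<le> length vs" and vl: "length vs \<le> l" and vd: "distinct vs"
    and vc: "\<forall>i < length vs. {vs ! i, vs ! ((i + 1) mod length vs)} \<in> insert e E"
    using hs unfolding has_short_cycle_def by blast
  define k where "k = length vs"
  obtain i0 where i0: "i0 < k" "{vs ! i0, vs ! ((i0 + 1) mod k)} \<notin> E"
    using nE v3 vl vd unfolding has_short_cycle_def k_def by blast
  have ei0: "e = {vs ! i0, vs ! ((i0 + 1) mod k)}" using i0 vc k_def by auto
  define ws where "ws = rotate (Suc i0) vs"
  have wl: "length ws = k" unfolding ws_def k_def by simp
  have wd: "distinct ws" unfolding ws_def using vd by simp
  have wn: "ws ! j = vs ! ((Suc i0 + j) mod k)" if "j < k" for j
    unfolding ws_def k_def by (rule nth_rotate) (use that k_def in simp)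
  have k3: "3 \<le> k" using v3 k_def by simp
  have wne: "ws \<noteq> []" using k3 wl by auto
  have hdw: "hd ws = vs ! ((i0 + 1) mod k)"
  proof -
    have "ws \<noteq> []" using k3 wl by auto
    then show ?thesis using wn[of 0] k3 by (simp add: hd_conv_nth)
  qed
  have "last ws = ws ! (k - 1)" using wl k3 wne by (simp add: last_conv_nth)
  also have "\<dots> = vs ! ((Suc i0 + (k - 1)) mod k)" using wn[of "k - 1"] k3 by simp
  also have "(Suc i0 + (k - 1)) mod k = i0" using k3 i0(1)
    by (metis Suc_pred' add_Suc add_Suc_right bot_nat_0.not_eq_extremum le_zero_eq mod_add_self2 mod_less numeral_3_eq_3 zero_less_Suc)
  finally have lw: "last ws = vs ! i0" .
  have ew: "e = {last ws, hd ws}" using ei0 lw hdw by auto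
  have ew2: "e = {ws ! (k - 1), ws ! 0}" using ew wl k3 wne by (simp add: last_conv_nth hd_conv_nth)
  have pE: "set (pedges ws) \<subseteq> E"
  proof
    fix f assume "f \<in> set (pedges ws)"
    then obtain j where j: "Suc j < k" "f = {ws ! j, ws ! Suc j}" using pedges_set wl by metis
    define t where "t = (Suc i0 + j) mod k"
    have tk: "t < k" unfolding t_def using k3 by simp
    have "ws ! Suc j = vs ! ((Suc i0 + Suc j) mod k)" using wn j by simp
    also have "(Suc i0 + Suc j) mod k = (t + 1) mod k" unfolding t_def by (simp add: mod_Suc_eq)
    finally have "f = {vs ! t, vs ! ((t + 1) mod k)}" using j wn t_def by simp
    then have fi: "f \<in> insert e E" using vc tk k_def by simp
    have "f \<noteq> e"
    proof
      assume "f = e"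
      then have "{ws ! j, ws ! Suc j} = {ws ! (k - 1), ws ! 0}" using j ew2 by simp
      moreover have "ws ! j \<noteq> ws ! (k - 1)" using wd wl j by (simp add: nth_eq_iff_index_eq)
      moreover have "ws ! j = ws ! 0 \<Longrightarrow> j = 0" using wd wl j by (simp add: nth_eq_iff_index_eq)
      moreover have "ws ! Suc j = ws ! (k - 1) \<Longrightarrow> Suc j = k - 1" using wd wl j by (simp add: nth_eq_iff_index_eq)
      ultimately show False using k3 by (auto simp: doubleton_eq_iff)
    qed
    then show "f \<in> E" using fi by simp
  qed
  have ex: "\<exists>f\<in>set (pedges ws). f \<notin> E1"
  proof (rule ccontr)
    assume "\<not> ?thesis"
    then have allE1: "set (pedges ws) \<subseteq> E1" by auto
    have "\<forall>i < length ws. {ws ! i, ws ! ((i + 1) mod length ws)} \<in> insert e E1"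
    proof (intro allI impI)
      fix i assume i: "i < length ws"
      show "{ws ! i, ws ! ((i + 1) mod length ws)} \<in> insert e E1"
      proof (cases "Suc i < k")
        case True
        then show ?thesis using pedges_nth[of i ws] allE1 wl by auto
      next
        case False
        then have "i = k - 1" using i wl by simp
        then show ?thesis using ew2 wl k3 by (auto simp: insert_commute)
      qed
    qed
    then have "has_short_cycle l (insert e E1)" unfolding has_short_cycle_def
      using wd wl k3 vl k_def by (intro exI[of _ ws]) simp
    then show False using nE1 by simp
  qed
  show ?thesis using wd wl k3 vl k_def pE ew ex by (intro exI[of _ ws]) simp
qed

lemma weight_nonneg: "0 \<le> p \<Longrightarrow> p \<le> 1 \<Longrightarrow> 0 \<le> gnp_weight n p E"
  unfolding gnp_weight_def by simp

lemma weight_pos: "0 < p \<Longrightarrow> p < 1 \<Longrightarrow> 0 < gnp_weight n p E"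
  unfolding gnp_weight_def by simp

lemma weight_remove:
  assumes "S \<subseteq> E" "E \<subseteq> all_edges n" "p \<noteq> 1"
  shows "gnp_weight n p E = (p / (1 - p)) ^ card S * gnp_weight n p (E - S)"
proof -
  have fE: "finite E" using assms(2) all_edges_finite finite_subset by blast
  have fS: "finite S" using fE assms(1) finite_subset by blast
  have c1: "card E = card (E - S) + card S" using fE assms(1) fS
    by (metis card_Diff_subset card_mono le_add_diff_inverse2)
  have "card E \<le> card (all_edges n)" using assms(2) all_edges_finite card_mono by blast
  then have c2: "card (all_edges n) - card (E - S) = (card (all_edges n) - card E) + card S"
    using c1 by linarith
  have q: "1 - p \<noteq> 0" using assms(3) by simp
  have w1: "gnp_weight n p E = p ^ card (E - S) * p ^ card S * (1 - p) ^ (card (all_edges n) - card E)"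
    unfolding gnp_weight_def c1 by (simp add: power_add)
  have w2: "gnp_weight n p (E - S) = p ^ card (E - S) * ((1 - p) ^ (card (all_edges n) - card E) * (1 - p) ^ card S)"
    unfolding gnp_weight_def c2 by (simp add: power_add)
  have w3: "(p / (1 - p)) ^ card S * (1 - p) ^ card S = p ^ card S"
    using q by (simp add: power_divide)
  show ?thesis unfolding w1 w2 using w3 by (simp add: algebra_simps)
qed

lemma sum_remove:
  assumes "\<forall>E\<in>F. S \<subseteq> E \<and> E \<subseteq> all_edges n \<and> E - S \<in> G" "finite G" "0 \<le> p" "p < 1"
  shows "sum (gnp_weight n p) F \<le> (p / (1 - p)) ^ card S * sum (gnp_weight n p) G"
proof -
  have "sum (gnp_weight n p) F = (\<Sum>E\<in>F. (p / (1 - p)) ^ card S * gnp_weight n p (E - S))"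
    using assms(1,4) by (intro sum.cong refl weight_remove) auto
  also have "\<dots> = (p / (1 - p)) ^ card S * (\<Sum>E\<in>F. gnp_weight n p (E - S))"
    by (simp add: sum_distrib_left)
  also have "(\<Sum>E\<in>F. gnp_weight n p (E - S)) = sum (gnp_weight n p) ((\<lambda>E. E - S) ` F)"
  proof -
    have "inj_on (\<lambda>E. E - S) F"
      using assms(1) by (intro inj_onI) (metis Diff_partition)
    then show ?thesis by (simp add: sum.reindex)
  qed
  also have "sum (gnp_weight n p) ((\<lambda>E. E - S) ` F) \<le> sum (gnp_weight n p) G"
    using assms by (intro sum_mono2) (auto intro: weight_nonneg)
  finally show ?thesis
    using assms(3,4) by (simp add: mult_left_mono)
qed

lemma sum_add:
  assumes "\<forall>E\<in>G. e \<notin> E \<and> E \<subseteq> all_edges n \<and> insert e E \<in> F" "e \<in> all_edges n" "finite F" "0 \<le> p" "p < 1"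
  shows "(p / (1 - p)) * sum (gnp_weight n p) G \<le> sum (gnp_weight n p) F"
proof -
  have w: "gnp_weight n p (insert e E) = (p / (1 - p)) * gnp_weight n p E" if "E \<in> G" for E
  proof -
    have "gnp_weight n p (insert e E) = (p / (1 - p)) ^ card {e} * gnp_weight n p (insert e E - {e})"
      using assms that by (intro weight_remove) auto
    then show ?thesis using assms(1) that by simp
  qed
  have "(p / (1 - p)) * sum (gnp_weight n p) G = (\<Sum>E\<in>G. gnp_weight n p (insert e E))"
    using w by (simp add: sum_distrib_left)
  also have "\<dots> = sum (gnp_weight n p) (insert e ` G)"
  proof -
    have "inj_on (insert e) G"
      using assms(1) by (intro inj_onI) (metis Diff_insert_absorb)
    then show ?thesis by (simp add: sum.reindex)
  qed
  also have "\<dots> \<le> sum (gnp_weight n p) F"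
    using assms by (intro sum_mono2) (auto intro: weight_nonneg)
  finally show ?thesis .
qed

lemma sum_UN_le':
  fixes f :: "'a \<Rightarrow> real"
  assumes "finite I" "\<forall>i\<in>I. finite (A i)" "\<forall>x. 0 \<le> f x"
  shows "sum f (\<Union>i\<in>I. A i) \<le> (\<Sum>i\<in>I. sum f (A i))"
  using assms
proof (induction I rule: finite_induct)
  case (insert i I)
  have fin: "finite (\<Union>i\<in>I. A i)" using insert by auto
  have "sum f (\<Union>i\<in>insert i I. A i) = sum f (A i \<union> (\<Union>i\<in>I. A i))" by simp
  also have "\<dots> = sum f (A i) + sum f (\<Union>i\<in>I. A i) - sum f (A i \<inter> (\<Union>i\<in>I. A i))"
    using sum.union_inter[of "A i" "\<Union>i\<in>I. A i" f] insert fin by simp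
  also have "\<dots> \<le> sum f (A i) + sum f (\<Union>i\<in>I. A i)"
    using insert by (simp add: sum_nonneg)
  also have "\<dots> \<le> sum f (A i) + (\<Sum>i\<in>I. sum f (A i))"
    using insert by simp
  finally show ?case using insert by simp
qed simp

lemma hsc_mono: "E \<subseteq> E' \<Longrightarrow> has_short_cycle l E \<Longrightarrow> has_short_cycle l E'"
  unfolding has_short_cycle_def by blast

lemma hsc_empty: "\<not> has_short_cycle l {}"
  unfolding has_short_cycle_def by fastforce

lemma main_bound:
  fixes n l :: nat and lam :: real and E0 E1 :: "nat set set" and e :: "nat set"
  defines "p \<equiv> lam / real n"
  defines "W \<equiv> \<Union>(insert e E1)"
  defines "D \<equiv> (\<Sum>j<l. real (card W) * (real (card W) * (real n + real (card W) ^ 2) ^ j) * (p / (1 - p)) ^ Suc j)"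
  assumes p0: "0 < p" and p1: "p < 1"
    and a: "E0 \<subseteq> all_edges n" "E1 \<subseteq> all_edges n" "e \<in> all_edges n" "E0 \<inter> E1 = {}" "e \<notin> E0" "e \<notin> E1"
      "\<not> has_short_cycle l (insert e E1)"
  shows "(1 - D) * p \<le> Gt_cond_prob n l lam (\<lambda>E. e \<in> E) (\<lambda>E. E1 \<subseteq> E \<and> E \<inter> E0 = {})
     \<and> Gt_cond_prob n l lam (\<lambda>E. e \<in> E) (\<lambda>E. E1 \<subseteq> E \<and> E \<inter> E0 = {}) \<le> p"
proof -
  let ?w = "gnp_weight n p"
  define r where "r = p / (1 - p)"
  have r0: "0 < r" using p0 p1 r_def by simp
  define AEd where "AEd = all_edges n"
  have fAE: "finite AEd" unfolding AEd_def by (rule all_edges_finite)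
  define Om where "Om = {E. E \<subseteq> all_edges n \<and> \<not> has_short_cycle l E}"
  define FQ where "FQ = {E. E \<subseteq> all_edges n \<and> \<not> has_short_cycle l E \<and> (E1 \<subseteq> E \<and> E \<inter> E0 = {})}"
  define F1 where "F1 = {E. E \<subseteq> all_edges n \<and> \<not> has_short_cycle l E \<and> (e \<in> E \<and> (E1 \<subseteq> E \<and> E \<inter> E0 = {}))}"
  define F0 where "F0 = {E. E \<subseteq> all_edges n \<and> \<not> has_short_cycle l E \<and> E1 \<subseteq> E \<and> E \<inter> E0 = {} \<and> e \<notin> E}"
  define Good where "Good = {E \<in> F0. \<not> has_short_cycle l (insert e E)}"
  define Bad where "Bad = {E \<in> F0. has_short_cycle l (insert e E)}"
  have finP: "finite X" if "X \<subseteq> {E. E \<subseteq> all_edges n}" for X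
    using that finite_subset fAE AEd_def by (metis Collect_subset Pow_def finite_Pow_iff)
  have fOm: "finite Om" and fFQ: "finite FQ" and fF1: "finite F1" and fF0: "finite F0"
    and fGood: "finite Good" and fBad: "finite Bad"
    by (rule finP; auto simp: Om_def FQ_def F1_def F0_def Good_def Bad_def)+
  define Z where "Z = sum ?w Om"
  define A where "A = sum ?w F1"
  define B where "B = sum ?w F0"
  have wnn: "0 \<le> ?w E" for E using p0 p1 by (intro weight_nonneg) auto
  have Gdef: "Gt_cond_prob n l lam (\<lambda>E. e \<in> E) (\<lambda>E. E1 \<subseteq> E \<and> E \<inter> E0 = {}) = (A / Z) / (sum ?w FQ / Z)"
    unfolding Gt_cond_prob_def Gt_prob_def A_def Z_def Om_def F1_def FQ_def p_def by simp
  have Zpos: "0 < Z"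
  proof -
    have "{} \<in> Om" unfolding Om_def using hsc_empty by simp
    then have "?w {} \<le> Z" unfolding Z_def using fOm wnn by (intro member_le_sum) auto
    moreover have "0 < ?w {}" using p0 p1 by (intro weight_pos)
    ultimately show ?thesis by simp
  qed
  have FQsplit: "sum ?w FQ = A + B"
  proof -
    have "FQ = F1 \<union> F0" "F1 \<inter> F0 = {}" unfolding FQ_def F1_def F0_def by auto
    then show ?thesis unfolding A_def B_def using fF1 fF0 by (simp add: sum.union_disjoint)
  qed
  have G: "Gt_cond_prob n l lam (\<lambda>E. e \<in> E) (\<lambda>E. E1 \<subseteq> E \<and> E \<inter> E0 = {}) = A / (A + B)"
    unfolding Gdef FQsplit using Zpos by simp
  have A0: "0 \<le> A" unfolding A_def using wnn by (simp add: sum_nonneg)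
  have B0: "0 < B"
  proof -
    have nE1: "\<not> has_short_cycle l E1" using a(7) hsc_mono[of E1 "insert e E1" l] by blast
    have "E1 \<in> F0" unfolding F0_def using a nE1 by auto
    then have "?w E1 \<le> B" unfolding B_def using fF0 wnn by (intro member_le_sum) auto
    moreover have "0 < ?w E1" using p0 p1 by (intro weight_pos)
    ultimately show ?thesis by simp
  qed
  have upper: "A \<le> r * B"
  proof -
    have "A \<le> (p / (1 - p)) ^ card {e} * B"
      unfolding A_def B_def
    proof (rule sum_remove)
      show "\<forall>E\<in>F1. {e} \<subseteq> E \<and> E \<subseteq> all_edges n \<and> E - {e} \<in> F0"
        unfolding F1_def F0_def using a(6) hsc_mono[of "_ - {e}" _ l] by blast
    qed (use fF0 p0 p1 in auto)
    then show ?thesis unfolding r_def by simp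
  qed
  have BGB: "B = sum ?w Good + sum ?w Bad"
  proof -
    have "F0 = Good \<union> Bad" "Good \<inter> Bad = {}" unfolding Good_def Bad_def by auto
    then show ?thesis unfolding B_def using fGood fBad by (simp add: sum.union_disjoint)
  qed
  have lowerA: "r * sum ?w Good \<le> A"
    unfolding A_def r_def
  proof (rule sum_add)
    show "\<forall>E\<in>Good. e \<notin> E \<and> E \<subseteq> all_edges n \<and> insert e E \<in> F1"
      unfolding Good_def F0_def F1_def using a(3,5) by auto
  qed (use a fF1 p0 p1 in auto)
  have badB: "sum ?w Bad \<le> D * B"
  proof -
    define U where "U j a = {c \<in> codes n W j a. distinct (cedges c) \<and> set (cedges c) \<inter> E1 = {}}" for j a
    define T where "T c = {E \<in> F0. set (cedges c) \<subseteq> E}" for c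
    have fW: "finite W"
    proof -
      have fi: "finite (insert e E1)" using a(2,3) all_edges_finite finite_subset by blast
      have ff: "finite f" if "f \<in> insert e E1" for f
      proof -
        have "f \<in> all_edges n" using that a(2,3) by blast
        then have "card f = 2" by (rule all_edges_card)
        then show ?thesis by (intro card_ge_0_finite) simp
      qed
      show ?thesis unfolding W_def by (rule finite_Union[OF fi ff])
    qed
    have fU: "finite (U j a)" for j a
    proof -
      have "finite (codes n W j a)" using codes_card[OF fW, of n j a] by (rule conjunct1)
      moreover have "U j a \<subseteq> codes n W j a" unfolding U_def by (rule Collect_subset)
      ultimately show ?thesis by (rule finite_subset[rotated])
    qed
    have fT: "finite (T c)" for c
    proof -
      have "T c \<subseteq> F0" unfolding T_def by (rule Collect_subset)
      then show ?thesis using fF0 by (rule finite_subset)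
    qed
    have sub: "Bad \<subseteq> (\<Union>j\<in>{..<l}. \<Union>a\<in>W. \<Union>c\<in>U j a. T c)"
    proof
      fix E assume EB: "E \<in> Bad"
      then have EF0: "E \<in> F0" and hs: "has_short_cycle l (insert e E)" unfolding Bad_def by auto
      have nE: "\<not> has_short_cycle l E" and EAE: "E \<subseteq> all_edges n" using EF0 unfolding F0_def by auto
      obtain ws where ws: "distinct ws" "3 \<le> length ws" "length ws \<le> l" "set (pedges ws) \<subseteq> E"
        "e = {last ws, hd ws}" "\<exists>f\<in>set (pedges ws). f \<notin> E1"
        using cycle_path[OF hs nE a(7)] by blast
      have lW: "last ws \<in> W" and hW: "hd ws \<in> W" using ws(5) unfolding W_def by auto
      have E1W: "\<Union>E1 \<subseteq> W" unfolding W_def by auto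
      obtain j a c where c: "c \<in> codes n W j a" "a = hd ws \<or> (a \<in> W \<and> hd ws \<in> W)"
        "set (cedges c) \<subseteq> E - E1" "distinct (cedges c)" "Suc j < length ws"
        using extract_code[OF ws(1) ws(4) EAE lW E1W ws(6)] by (elim exE conjE) (rule that)
      have "j \<in> {..<l}" using c(5) ws(3) by simp
      moreover have "a \<in> W" using c(2) hW by blast
      moreover have "c \<in> U j a" unfolding U_def using c by auto
      moreover have "E \<in> T c" unfolding T_def using c EF0 by auto
      ultimately show "E \<in> (\<Union>j\<in>{..<l}. \<Union>a\<in>W. \<Union>c\<in>U j a. T c)" by blast
    qed
    have inner: "sum ?w (T c) \<le> r ^ Suc j * B" if "c \<in> U j a" for c j a
    proof -
      have cc: "card (set (cedges c)) = Suc j"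
      proof -
        have d: "distinct (cedges c)" using that unfolding U_def by simp
        have "card (set (cedges c)) = length (cedges c)" by (rule distinct_card[OF d])
        also have "\<dots> = length c" unfolding cedges_def by simp
        also have "\<dots> = Suc j" using that codes_length[of c n W j a] unfolding U_def by simp
        finally show ?thesis .
      qed
      have "sum ?w (T c) \<le> (p / (1 - p)) ^ card (set (cedges c)) * B"
        unfolding B_def
      proof (rule sum_remove)
        show "\<forall>E\<in>T c. set (cedges c) \<subseteq> E \<and> E \<subseteq> all_edges n \<and> E - set (cedges c) \<in> F0"
        proof
          fix E assume "E \<in> T c"
          then have "E \<in> F0" "set (cedges c) \<subseteq> E" unfolding T_def by auto
          moreover have "set (cedges c) \<inter> E1 = {}" using that unfolding U_def by auto
          moreover have "\<not> has_short_cycle l (E - set (cedges c))"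
            using \<open>E \<in> F0\<close> hsc_mono[of "E - set (cedges c)" E l] unfolding F0_def by blast
          ultimately show "set (cedges c) \<subseteq> E \<and> E \<subseteq> all_edges n \<and> E - set (cedges c) \<in> F0"
            unfolding F0_def by blast
        qed
      qed (use fF0 p0 p1 in auto)
      then show ?thesis using cc r_def by simp
    qed
    have fUN: "finite (\<Union>c\<in>U j a. T c)" for j a by (intro finite_UN_I fU fT)
    have fUN2: "finite (\<Union>a\<in>W. \<Union>c\<in>U j a. T c)" for j by (intro finite_UN_I fW fUN)
    have fBig: "finite (\<Union>j\<in>{..<l}. \<Union>a\<in>W. \<Union>c\<in>U j a. T c)" by (intro finite_UN_I finite_lessThan fUN2)
    have "sum ?w Bad \<le> sum ?w (\<Union>j\<in>{..<l}. \<Union>a\<in>W. \<Union>c\<in>U j a. T c)"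
      by (rule sum_mono2[OF fBig sub wnn])
    also have "\<dots> \<le> (\<Sum>j<l. sum ?w (\<Union>a\<in>W. \<Union>c\<in>U j a. T c))"
      by (rule sum_UN_le') (simp_all add: fUN2 wnn)
    also have "\<dots> \<le> (\<Sum>j<l. \<Sum>a\<in>W. sum ?w (\<Union>c\<in>U j a. T c))"
      by (rule sum_mono, rule sum_UN_le') (simp_all add: fW fUN wnn)
    also have "\<dots> \<le> (\<Sum>j<l. \<Sum>a\<in>W. \<Sum>c\<in>U j a. sum ?w (T c))"
      by (rule sum_mono, rule sum_mono, rule sum_UN_le') (simp_all add: fU fT wnn)
    also have "\<dots> \<le> (\<Sum>j<l. \<Sum>a\<in>W. \<Sum>c\<in>U j a. r ^ Suc j * B)"
      by (intro sum_mono inner)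
    also have "\<dots> \<le> (\<Sum>j<l. \<Sum>a\<in>W. real (card W * (n + card W ^ 2) ^ j) * (r ^ Suc j * B))"
    proof (intro sum_mono)
      fix j a
      have cc: "finite (codes n W j a) \<and> card (codes n W j a) \<le> card W * (n + card W ^ 2) ^ j"
        by (rule codes_card[OF fW])
      have "U j a \<subseteq> codes n W j a" unfolding U_def by (rule Collect_subset)
      then have "card (U j a) \<le> card (codes n W j a)" using cc by (intro card_mono) simp_all
      then have "card (U j a) \<le> card W * (n + card W ^ 2) ^ j" using cc by linarith
      then have k: "real (card (U j a)) \<le> real (card W * (n + card W ^ 2) ^ j)" by (rule of_nat_mono)
      have nn: "0 \<le> r ^ Suc j * B" using r0 B0 by simp
      have "(\<Sum>c\<in>U j a. r ^ Suc j * B) = real (card (U j a)) * (r ^ Suc j * B)" by simp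
      also have "\<dots> \<le> real (card W * (n + card W ^ 2) ^ j) * (r ^ Suc j * B)"
        by (rule mult_right_mono[OF k nn])
      finally show "(\<Sum>c\<in>U j a. r ^ Suc j * B) \<le> real (card W * (n + card W ^ 2) ^ j) * (r ^ Suc j * B)" .
    qed
    also have "\<dots> = D * B" unfolding D_def r_def sum_distrib_right
      by (intro sum.cong refl) (simp add: algebra_simps)
    finally show ?thesis .
  qed
  have Dnn: "0 \<le> D" unfolding D_def
    by (intro sum_nonneg mult_nonneg_nonneg zero_le_power) (use r0 r_def in auto)
  show ?thesis
  proof
    have "A * (1 - p) \<le> p * B" using upper p1 unfolding r_def by (simp add: field_simps)
    then have "A \<le> p * (A + B)" by (simp add: algebra_simps)
    then show "Gt_cond_prob n l lam (\<lambda>E. e \<in> E) (\<lambda>E. E1 \<subseteq> E \<and> E \<inter> E0 = {}) \<le> p"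
      unfolding G using A0 B0 by (simp add: divide_le_eq)
  next
    have "(1 - D) * B \<le> sum ?w Good" using BGB badB by (simp add: algebra_simps)
    then have "r * ((1 - D) * B) \<le> r * sum ?w Good" using r0 by (intro mult_left_mono) auto
    then have "r * ((1 - D) * B) \<le> A" using lowerA by linarith
    then have h: "p * (1 - D) * B \<le> (1 - p) * A" using p1 unfolding r_def by (simp add: field_simps)
    have "(1 - D) * p * (A + B) \<le> A"
    proof -
      have "(1 - D) * p * (A + B) = (1 - D) * p * A + p * (1 - D) * B" by (simp add: algebra_simps)
      also have "\<dots> \<le> (1 - D) * p * A + (1 - p) * A" using h by simp
      also have "\<dots> = A - D * p * A" by (simp add: algebra_simps)
      also have "\<dots> \<le> A" using Dnn p0 A0 by simp
      finally show ?thesis .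
    qed
    then show "(1 - D) * p \<le> Gt_cond_prob n l lam (\<lambda>E. e \<in> E) (\<lambda>E. E1 \<subseteq> E \<and> E \<inter> E0 = {})"
      unfolding G using A0 B0 by (simp add: le_divide_eq)
  qed
qed

lemma geom_le: "(2::real) \<le> C \<Longrightarrow> (\<Sum>j<L. C ^ j) \<le> C ^ L"
proof (induction L)
  case (Suc L)
  have "(\<Sum>j<Suc L. C ^ j) = (\<Sum>j<L. C ^ j) + C ^ L" by simp
  also have "\<dots> \<le> 2 * C ^ L" using Suc by simp
  also have "\<dots> \<le> C * C ^ L" using Suc.prems by (intro mult_right_mono) auto
  finally show ?case by simp
qed simp

lemma D_small:
  fixes n l :: nat and lam w :: real
  assumes n1: "1 \<le> n" and lam: "0 < lam" and pl: "lam / n \<le> 1/2"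
    and u32: "32 * lam \<le> real n powr (1/24)" and uC: "(34 * lam + 2) ^ l \<le> real n powr (1/24)"
    and w0: "0 \<le> w" and wb: "w \<le> 2 * real n powr (1/3) + 2"
  shows "(\<Sum>j<l. w * (w * (real n + w ^ 2) ^ j) * ((lam / n) / (1 - lam / n)) ^ Suc j) \<le> real n powr (-1/4)"
proof -
  define u where "u = real n powr (1/24)"
  define C where "C = 34 * lam + 2"
  define p where "p = lam / n"
  define r where "r = p / (1 - p)"
  have npos: "0 < real n" using n1 by simp
  have u0: "0 < u" unfolding u_def using npos by simp
  have u1: "1 \<le> u" unfolding u_def using n1 by (intro ge_one_powr_ge_zero) auto
  have pw: "real n powr (real k / 24) = u ^ k" for k
  proof -
    have "u ^ k = u powr real k" using u0 by (simp add: powr_realpow)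
    also have "\<dots> = real n powr (real k / 24)" unfolding u_def by (simp add: powr_powr)
    finally show ?thesis by simp
  qed
  have nu: "real n = u ^ 24"
  proof -
    have "real n = real n powr (real 24 / 24)" using npos by simp
    also have "\<dots> = u ^ 24" by (rule pw)
    finally show ?thesis .
  qed
  have tu: "real n powr (1/3) = u ^ 8"
  proof -
    have "real n powr (1/3) = real n powr (real 8 / 24)" by simp
    also have "\<dots> = u ^ 8" by (rule pw)
    finally show ?thesis .
  qed
  have qu: "real n powr (-1/4) = 1 / u ^ 6"
  proof -
    have "real n powr (-1/4) = real n powr (- (real 6 / 24))" by simp
    also have "\<dots> = inverse (real n powr (real 6 / 24))" by (rule powr_minus)
    also have "\<dots> = 1 / u ^ 6" unfolding pw by (simp add: divide_inverse)
    finally show ?thesis .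
  qed
  have p0: "0 < p" unfolding p_def using lam npos by simp
  have rle: "r \<le> 2 * p"
  proof -
    have h: "1/2 \<le> 1 - p" using pl p_def by simp
    have "p / (1 - p) \<le> p / (1/2)" using p0 h by (intro divide_left_mono) auto
    then show ?thesis unfolding r_def by simp
  qed
  have p_half: "p \<le> 1/2" using pl p_def by simp
  have r0: "0 \<le> r" unfolding r_def using p0 p_half by simp
  have u8: "1 \<le> u ^ 8" using u1 by simp
  have wb2: "w \<le> 4 * u ^ 8" using wb tu u8 by simp
  have ww: "w * w \<le> 16 * u ^ 16"
  proof -
    have "w * w \<le> (4 * u ^ 8) * (4 * u ^ 8)" using wb2 w0 by (intro mult_mono) auto
    then show ?thesis by (simp add: power_add[symmetric] algebra_simps)
  qed
  have nw: "real n + w ^ 2 \<le> 17 * u ^ 24"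
  proof -
    have "u ^ 16 \<le> u ^ 24" using u1 by (intro power_increasing) auto
    then show ?thesis using ww nu by (simp add: power2_eq_square)
  qed
  have pu: "p = lam / u ^ 24" unfolding p_def nu by simp
  have base: "(real n + w ^ 2) * r \<le> C"
  proof -
    have "(real n + w ^ 2) * r \<le> (17 * u ^ 24) * (2 * p)"
      using nw rle r0 w0 by (intro mult_mono) auto
    also have "\<dots> = 34 * lam" unfolding pu using u0 by simp
    finally show ?thesis unfolding C_def by simp
  qed
  have base0: "0 \<le> (real n + w ^ 2) * r" using r0 w0 by simp
  have trm: "w * (w * (real n + w ^ 2) ^ j) * r ^ Suc j \<le> (16 * u ^ 16) * (2 * p) * C ^ j" for j
  proof -
    have "w * (w * (real n + w ^ 2) ^ j) * r ^ Suc j = (w * w) * r * ((real n + w ^ 2) * r) ^ j"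
      by (simp only: power_mult_distrib power_Suc) (simp only: mult_ac)
    also have "\<dots> \<le> (16 * u ^ 16) * (2 * p) * C ^ j"
    proof -
      have s1: "(w * w) * r \<le> (16 * u ^ 16) * (2 * p)"
        by (rule mult_mono[OF ww rle]) (use u0 r0 in auto)
      have s2: "((real n + w ^ 2) * r) ^ j \<le> C ^ j"
        using base base0 by (rule power_mono)
      have s3: "0 \<le> (16 * u ^ 16) * (2 * p)" using u0 p0 by simp
      show ?thesis using mult_mono[OF s1 s2 s3] base0 by simp
    qed
    finally show ?thesis .
  qed
  have "(\<Sum>j<l. w * (w * (real n + w ^ 2) ^ j) * r ^ Suc j) \<le> (\<Sum>j<l. (16 * u ^ 16) * (2 * p) * C ^ j)"
    by (intro sum_mono trm)
  also have "\<dots> = (32 * u ^ 16 * p) * (\<Sum>j<l. C ^ j)" unfolding sum_distrib_left by (intro sum.cong refl) (simp add: algebra_simps)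
  also have "\<dots> \<le> (32 * u ^ 16 * p) * C ^ l"
    using geom_le[of C l] lam p0 unfolding C_def by (intro mult_left_mono) auto
  also have "\<dots> = 32 * lam * C ^ l / u ^ 8"
  proof -
    have e24: "u ^ 24 = u ^ 16 * u ^ 8" by (simp flip: power_add)
    show ?thesis unfolding pu e24 using u0 by (simp add: field_simps)
  qed
  also have "\<dots> \<le> u * u / u ^ 8"
    using u32 uC u_def C_def u0 lam by (intro divide_right_mono mult_mono) auto
  also have "\<dots> = 1 / u ^ 6"
  proof -
    have e8: "u ^ 8 = u ^ 6 * (u * u)" by (simp flip: power_add add: power2_eq_square[symmetric])
    show ?thesis unfolding e8 using u0 by (simp add: field_simps)
  qed
  finally show ?thesis unfolding qu r_def p_def .
qed

lemma cardW:
  assumes "E1 \<subseteq> all_edges n" "e \<in> all_edges n" "e \<notin> E1"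
  shows "card (\<Union>(insert e E1)) \<le> 2 * card E1 + 2"
proof -
  have fin: "finite (insert e E1)" using assms all_edges_finite finite_subset by blast
  have "card (\<Union>(insert e E1)) \<le> sum card (insert e E1)" by (rule card_Union_le_sum_card)
  also have "\<dots> = sum (\<lambda>_. 2) (insert e E1)"
    using assms all_edges_card by (intro sum.cong) auto
  also have "\<dots> = 2 * card (insert e E1)" by simp
  also have "\<dots> = 2 * card E1 + 2" using fin assms(3) by simp
  finally show ?thesis .
qed

lemma aux_mono:
  fixes a b c d :: real
  assumes "b \<le> a" "0 \<le> c / d"
  shows "(1 - a) * c / d \<le> (1 - b) * (c / d)"
proof -
  have "(1 - a) * c / d = (1 - a) * (c / d)" by simp
  also have "\<dots> \<le> (1 - b) * (c / d)" using assms by (intro mult_right_mono) auto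
  finally show ?thesis .
qed

theorem lemma6:
  fixes lam :: real and ell :: "nat \<Rightarrow> nat"
  assumes "lam > 0"
    and "(\<lambda>n. real (ell n)) \<in> o(\<lambda>n. ln (real n))"
  shows "\<forall>\<^sub>F n in sequentially.
    \<forall>E0 E1 e. E0 \<subseteq> all_edges n \<and> E1 \<subseteq> all_edges n \<and> e \<in> all_edges n \<and>
      E0 \<inter> E1 = {} \<and> e \<notin> E0 \<and> e \<notin> E1 \<and>
      real (card E1) \<le> real n powr (1/3) \<and>
      \<not> has_short_cycle (ell n) (insert e E1) \<longrightarrow>
        (1 - real n powr (-1/4)) * lam / real n
          \<le> Gt_cond_prob n (ell n) lam (\<lambda>E. e \<in> E) (\<lambda>E. E1 \<subseteq> E \<and> E \<inter> E0 = {}) \<and>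
        Gt_cond_prob n (ell n) lam (\<lambda>E. e \<in> E) (\<lambda>E. E1 \<subseteq> E \<and> E \<inter> E0 = {}) \<le> lam / real n"
proof -
  define C where "C = 34 * lam + 2"
  have C2: "2 < C" unfolding C_def using assms(1) by simp
  have lnC: "0 < ln C" using C2 by simp
  have ev1: "\<forall>\<^sub>F n in sequentially. 1 \<le> n" by (rule eventually_ge_at_top)
  have ev2: "\<forall>\<^sub>F n in sequentially. lam / real n \<le> 1/2"
  proof -
    have "\<forall>\<^sub>F n in sequentially. nat \<lceil>2 * lam\<rceil> + 1 \<le> n" by (rule eventually_ge_at_top)
    then show ?thesis
    proof (rule eventually_mono)
      fix n assume "nat \<lceil>2 * lam\<rceil> + 1 \<le> n"
      then have "2 * lam \<le> real n" "0 < real n" by linarith+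
      then show "lam / real n \<le> 1/2" by (simp add: divide_le_eq)
    qed
  qed
  have ev3: "\<forall>\<^sub>F n in sequentially. 32 * lam \<le> real n powr (1/24)"
  proof -
    have "\<forall>\<^sub>F n in sequentially. nat \<lceil>(32 * lam) ^ 24\<rceil> \<le> n" by (rule eventually_ge_at_top)
    then show ?thesis
    proof (rule eventually_mono)
      fix n assume "nat \<lceil>(32 * lam) ^ 24\<rceil> \<le> n"
      then have h: "(32 * lam) ^ 24 \<le> real n" by linarith
      have l0: "0 \<le> 32 * lam" using assms(1) by simp
      define x where "x = 32 * lam"
      have x0: "0 < x" unfolding x_def using assms(1) by simp
      have x24: "x powr 24 = x ^ 24" using x0 by (intro powr_numeral) simp
      have "x = x powr (24 * (1/24))" using x0 by simp
      also have "\<dots> = (x powr 24) powr (1/24)" by (simp only: powr_powr)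
      also have "\<dots> = (x ^ 24) powr (1/24)" unfolding x24 ..
      finally have "x = (x ^ 24) powr (1/24)" .
      also have "\<dots> \<le> real n powr (1/24)" using h x0 unfolding x_def by (intro powr_mono2) auto
      finally have "x \<le> real n powr (1/24)" .
      then show "32 * lam \<le> real n powr (1/24)" unfolding x_def .
    qed
  qed
  have ev4: "\<forall>\<^sub>F n in sequentially. C ^ ell n \<le> real n powr (1/24)"
  proof -
    have "\<forall>\<^sub>F n in sequentially. norm (real (ell n)) \<le> (1 / (24 * ln C)) * norm (ln (real n))"
      using landau_o.smallD[OF assms(2), of "1 / (24 * ln C)"] lnC by simp
    then show ?thesis using ev1
    proof (eventually_elim)
      case (elim n)
      have ln0: "0 \<le> ln (real n)" using elim(2) by simp
      have "real (ell n) \<le> (1 / (24 * ln C)) * ln (real n)" using elim(1) ln0 by simp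
      then have "real (ell n) * ln C \<le> ln (real n) / 24" using lnC by (simp add: field_simps)
      then have "exp (real (ell n) * ln C) \<le> exp (ln (real n) / 24)" by simp
      moreover have "exp (real (ell n) * ln C) = C ^ ell n"
      proof -
        have "C ^ ell n = C powr real (ell n)" using C2 by (simp add: powr_realpow)
        also have "\<dots> = exp (real (ell n) * ln C)" using C2 by (simp add: powr_def)
        finally show ?thesis by simp
      qed
      moreover have "exp (ln (real n) / 24) = real n powr (1/24)"
        using elim(2) by (simp add: powr_def)
      ultimately show ?case by simp
    qed
  qed
  show ?thesis using ev1 ev2 ev3 ev4
  proof (eventually_elim)
    case (elim n)
    show ?case
    proof (intro allI impI)
      fix E0 E1 e
      assume H: "E0 \<subseteq> all_edges n \<and> E1 \<subseteq> all_edges n \<and> e \<in> all_edges n \<and>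
      E0 \<inter> E1 = {} \<and> e \<notin> E0 \<and> e \<notin> E1 \<and>
      real (card E1) \<le> real n powr (1/3) \<and>
      \<not> has_short_cycle (ell n) (insert e E1)"
      define p where "p = lam / real n"
      have npos: "0 < real n" using elim(1) by simp
      have p0: "0 < p" unfolding p_def using assms(1) npos by simp
      have p1: "p < 1" using elim(2) unfolding p_def by linarith
      define w where "w = real (card (\<Union>(insert e E1)))"
      have wb: "w \<le> 2 * real n powr (1/3) + 2"
      proof -
        have "card (\<Union>(insert e E1)) \<le> 2 * card E1 + 2" using H by (intro cardW) auto
        then have "w \<le> 2 * real (card E1) + 2" unfolding w_def by linarith
        then show ?thesis using H by simp
      qed
      have Ds: "(\<Sum>j<ell n. w * (w * (real n + w ^ 2) ^ j) * ((lam / n) / (1 - lam / n)) ^ Suc j) \<le> real n powr (-1/4)"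
        using elim C_def assms(1) wb unfolding w_def by (intro D_small) auto
      have MB: "(1 - (\<Sum>j<ell n. w * (w * (real n + w ^ 2) ^ j) * ((lam / n) / (1 - lam / n)) ^ Suc j)) * (lam / real n)
          \<le> Gt_cond_prob n (ell n) lam (\<lambda>E. e \<in> E) (\<lambda>E. E1 \<subseteq> E \<and> E \<inter> E0 = {}) \<and>
        Gt_cond_prob n (ell n) lam (\<lambda>E. e \<in> E) (\<lambda>E. E1 \<subseteq> E \<and> E \<inter> E0 = {}) \<le> lam / real n"
        unfolding w_def using H p0 p1 unfolding p_def by (intro main_bound) auto
      have L: "(1 - real n powr (-1/4)) * lam / real n
         \<le> (1 - (\<Sum>j<ell n. w * (w * (real n + w ^ 2) ^ j) * ((lam / n) / (1 - lam / n)) ^ Suc j)) * (lam / real n)"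
        by (rule aux_mono[OF Ds]) (use p0 p_def in simp)
      show "(1 - real n powr (-1/4)) * lam / real n
          \<le> Gt_cond_prob n (ell n) lam (\<lambda>E. e \<in> E) (\<lambda>E. E1 \<subseteq> E \<and> E \<inter> E0 = {}) \<and>
        Gt_cond_prob n (ell n) lam (\<lambda>E. e \<in> E) (\<lambda>E. E1 \<subseteq> E \<and> E \<inter> E0 = {}) \<le> lam / real n"
        using MB L by linarith
    qed
  qed
qed

end
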